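(* Let $p$ be a prime, let $N,K,T,M,h$ be positive integers with $K\mid M$, and let $\beta_1,\ldots,\beta_{K+T}\in\mathbb{F}_p$ be pairwise distinct and $\alpha_1,\ldots,\alpha_N\in\mathbb{F}_p$ be pairwise distinct with $\{\alpha_1,\ldots,\alpha_N\}\cap\{\beta_1,\ldots,\beta_{K+T}\}=\emptyset$. For $k\in[K+T]$ let $L_k(x)=\prod_{\ell\in[K+T]\setminus\{k\}}\frac{x-\beta_\ell}{\beta_k-\beta_\ell}$. For each client $n\in[N]$ let $D_n,d_n$ be positive integers, let $\overline{X}_n^i\in\mathbb{F}_p^{M\times d_n}$ and $\overline{W}_n^i\in\mathbb{F}_p^{d_n\times h}$ for $i\in[D_n]$, and for $k\in[K]$ let $\overline{X}_{n,k}^i\in\mathbb{F}_p^{(M/K)\times d_n}$ be the $k$-th block of $M/K$ consecutive rows of $\overline{X}_n^i$. Let $Z_{n,k}^i\in\mathbb{F}_p^{(M/K)\times d_n}$ and $V_{n,k}^i\in\mathbb{F}_p^{d_n\times h}$ ($k=K+1,\ldots,K+T$) be arbitrary (mask) matrices, and define the polynomials $$F_n^i(x)=\sum_{k=1}^K\overline{X}_{n,k}^iL_k(x)+\sum_{k=K+1}^{K+T}Z_{n,k}^iL_k(x),\qquad G_n^i(x)=\sum_{k=1}^K\overline{W}_{n}^iL_k(x)+\sum_{k=K+1}^{K+T}V_{n,k}^iL_k(x).$$ Fix a batch $\mathcal{B}\subseteq[M/K]$ of row indices, and for a matrix $A$ with $M/K$ rows let $A^{(\mathcal{B})}$ denote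 its submatrix of rows indexed by $\mathcal{B}$. For each $n'\in[N]$ define the coded result $$\widetilde{H}_{n'}^{(\mathcal{B})}=\sum_{n=1}^N\sum_{i=1}^{D_n}F_n^{i}(\alpha_{n'})^{(\mathcal{B})}\,G_n^i(\alpha_{n'}),$$ and for each $n$ let $\overline{H}_n^{(\mathcal{B})}$ be the vertical stacking over $k=1,\ldots,K$ of the matrices $\sum_{i=1}^{D_n}(\overline{X}_{n,k}^{i})^{(\mathcal{B})}\overline{W}_n^i$. Then for every subset $\mathcal{U}\subseteq[N]$ with $|\mathcal{U}|\ge 2(K+T-1)+1$ (i.e., in the presence of up to $N-2(K+T-1)-1$ straggling clients whose results are missing), the sum $\overline{H}^{(\mathcal{B})}=\sum_{n=1}^N\overline{H}_n^{(\mathcal{B})}$ can be exactly recovered from $\{\widetilde{H}_{n'}^{(\mathcal{B})}:n'\in\mathcal{U}\}$ (together with the public points $\alpha_{n'}$, $\beta_k$).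
   Context: This describes the FedVS protocol for split vertical federated learning: client $n$ holds quantized local data (the $i$-th matrix $\overline{X}_n^i$ being the quantized $i$-th elementwise power of its data) and a quantized polynomial-network local model $(\overline{W}_n^1,\ldots,\overline{W}_n^{D_n})$; the pair $\widetilde{X}_{n,n'}=(F_n^i(\alpha_{n'}))_i$, $\widetilde{W}_{n,n'}=(G_n^i(\alpha_{n'}))_i$ is the Lagrange-coded secret share sent by client $n$ to client $n'$, and $\widetilde{H}^{(\mathcal{B})}_{n'}$ is what client $n'$ uploads to the server. $[N]=\{1,\ldots,N\}$. *)

theory Defs
  imports Main "HOL-Computational_Algebra.Primes" "HOL-Library.Cardinality"
begin

text \<open>Matrices over a field are represented as functions row index => column index => entry,
  with 0-based row/column indices; the dimensions are carried explicitly in the statement.\<close>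
type_synonym 'a fmat = "nat \<Rightarrow> nat \<Rightarrow> 'a"

definition mmul :: "nat \<Rightarrow> 'a::comm_ring_1 fmat \<Rightarrow> 'a fmat \<Rightarrow> 'a fmat" where
  "mmul d A B = (\<lambda>r c. \<Sum>j<d. A r j * B j c)"

definition lagrange_L :: "(nat \<Rightarrow> 'a::field) \<Rightarrow> nat \<Rightarrow> nat \<Rightarrow> 'a \<Rightarrow> 'a" where
  "lagrange_L beta KT k x = (\<Prod>l\<in>{1..KT} - {k}. (x - beta l) / (beta k - beta l))"

definition row_block :: "nat \<Rightarrow> nat \<Rightarrow> 'a fmat \<Rightarrow> nat \<Rightarrow> 'a fmat" where
  "row_block M K A k = (\<lambda>r c. A ((k - 1) * (M div K) + r) c)"

definition submat_rows :: "nat set \<Rightarrow> 'a fmat \<Rightarrow> 'a fmat" where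
  "submat_rows B A = (\<lambda>j c. A (sorted_list_of_set B ! j) c)"

text \<open>F_n^i(x) and G_n^i(x) (evaluated at x).  X n i = Xbar_n^i, Z n i k = Z_{n,k}^i,
  W n i = Wbar_n^i, V n i k = V_{n,k}^i.\<close>
definition polyF :: "nat \<Rightarrow> nat \<Rightarrow> nat \<Rightarrow> (nat \<Rightarrow> 'a::field) \<Rightarrow>
    (nat \<Rightarrow> nat \<Rightarrow> 'a fmat) \<Rightarrow> (nat \<Rightarrow> nat \<Rightarrow> nat \<Rightarrow> 'a fmat) \<Rightarrow> nat \<Rightarrow> nat \<Rightarrow> 'a \<Rightarrow> 'a fmat" where
  "polyF M K T beta X Z n i x = (\<lambda>r c.
      (\<Sum>k=1..K. row_block M K (X n i) k r c * lagrange_L beta (K+T) k x)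
    + (\<Sum>k=K+1..K+T. Z n i k r c * lagrange_L beta (K+T) k x))"

definition polyG :: "nat \<Rightarrow> nat \<Rightarrow> (nat \<Rightarrow> 'a::field) \<Rightarrow>
    (nat \<Rightarrow> nat \<Rightarrow> 'a fmat) \<Rightarrow> (nat \<Rightarrow> nat \<Rightarrow> nat \<Rightarrow> 'a fmat) \<Rightarrow> nat \<Rightarrow> nat \<Rightarrow> 'a \<Rightarrow> 'a fmat" where
  "polyG K T beta W V n i x = (\<lambda>r c.
      (\<Sum>k=1..K. W n i r c * lagrange_L beta (K+T) k x)
    + (\<Sum>k=K+1..K+T. V n i k r c * lagrange_L beta (K+T) k x))"

definition coded_H :: "nat \<Rightarrow> nat \<Rightarrow> nat \<Rightarrow> nat \<Rightarrow> (nat \<Rightarrow> 'a::field) \<Rightarrow> (nat \<Rightarrow> 'a) \<Rightarrow> nat set \<Rightarrow>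
    (nat \<Rightarrow> nat) \<Rightarrow> (nat \<Rightarrow> nat) \<Rightarrow>
    (nat \<Rightarrow> nat \<Rightarrow> 'a fmat) \<Rightarrow> (nat \<Rightarrow> nat \<Rightarrow> 'a fmat) \<Rightarrow>
    (nat \<Rightarrow> nat \<Rightarrow> nat \<Rightarrow> 'a fmat) \<Rightarrow> (nat \<Rightarrow> nat \<Rightarrow> nat \<Rightarrow> 'a fmat) \<Rightarrow> nat \<Rightarrow> 'a fmat" where
  "coded_H N K T M alpha beta B D d X W Z V n' = (\<lambda>r c.
     \<Sum>n=1..N. \<Sum>i=1..D n.
       mmul (d n) (submat_rows B (polyF M K T beta X Z n i (alpha n')))
                  (polyG K T beta W V n i (alpha n')) r c)"

text \<open>Hbar_n^(B): vertical stacking over k = 1..K of the |B| x h matrices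
  sum_i (Xbar_{n,k}^i)^(B) Wbar_n^i.  Row r of the stack lies in block r div |B| + 1,
  local row r mod |B|.\<close>
definition Hbar_n :: "nat \<Rightarrow> nat \<Rightarrow> nat set \<Rightarrow> (nat \<Rightarrow> nat) \<Rightarrow> (nat \<Rightarrow> nat) \<Rightarrow>
    (nat \<Rightarrow> nat \<Rightarrow> 'a::field fmat) \<Rightarrow> (nat \<Rightarrow> nat \<Rightarrow> 'a fmat) \<Rightarrow> nat \<Rightarrow> 'a fmat" where
  "Hbar_n K M B D d X W n = (\<lambda>r c.
     \<Sum>i=1..D n. mmul (d n) (submat_rows B (row_block M K (X n i) (r div card B + 1))) (W n i)
       (r mod card B) c)"

definition Hbar :: "nat \<Rightarrow> nat \<Rightarrow> nat \<Rightarrow> nat set \<Rightarrow> (nat \<Rightarrow> nat) \<Rightarrow> (nat \<Rightarrow> nat) \<Rightarrow>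
    (nat \<Rightarrow> nat \<Rightarrow> 'a::field fmat) \<Rightarrow> (nat \<Rightarrow> nat \<Rightarrow> 'a fmat) \<Rightarrow> 'a fmat" where
  "Hbar N K M B D d X W = (\<lambda>r c. \<Sum>n=1..N. Hbar_n K M B D d X W n r c)"

end

theory Submission
  imports Defs "HOL-Computational_Algebra.Polynomial"
begin

definition pdeg :: "nat \<Rightarrow> ('a::field \<Rightarrow> 'a) \<Rightarrow> bool" where
  "pdeg m f \<longleftrightarrow> (\<exists>P. degree P \<le> m \<and> f = poly P)"

lemma pdeg_const: "pdeg m (\<lambda>x. c)"
  unfolding pdeg_def by (rule exI[of _ "[:c:]"]) auto

lemma pdeg_mono: "pdeg m f \<Longrightarrow> m \<le> n \<Longrightarrow> pdeg n f"
  unfolding pdeg_def using order.trans by blast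

lemma pdeg_add: "pdeg m f \<Longrightarrow> pdeg m g \<Longrightarrow> pdeg m (\<lambda>x. f x + g x)"
  unfolding pdeg_def
proof (elim exE conjE)
  fix P Q assume "degree P \<le> m" "f = poly P" "degree Q \<le> m" "g = poly Q"
  then show "\<exists>R. degree R \<le> m \<and> (\<lambda>x. f x + g x) = poly R"
    by (intro exI[of _ "P + Q"]) (auto intro: degree_add_le)
qed

lemma pdeg_diff: "pdeg m f \<Longrightarrow> pdeg m g \<Longrightarrow> pdeg m (\<lambda>x. f x - g x)"
  unfolding pdeg_def
proof (elim exE conjE)
  fix P Q assume "degree P \<le> m" "f = poly P" "degree Q \<le> m" "g = poly Q"
  then show "\<exists>R. degree R \<le> m \<and> (\<lambda>x. f x - g x) = poly R"
    by (intro exI[of _ "P - Q"]) (auto intro: degree_diff_le)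
qed

lemma pdeg_mult: "pdeg m f \<Longrightarrow> pdeg n g \<Longrightarrow> pdeg (m + n) (\<lambda>x. f x * g x)"
  unfolding pdeg_def
proof (elim exE conjE)
  fix P Q assume "degree P \<le> m" "f = poly P" "degree Q \<le> n" "g = poly Q"
  then show "\<exists>R. degree R \<le> m + n \<and> (\<lambda>x. f x * g x) = poly R"
    by (intro exI[of _ "P * Q"]) (auto intro: order.trans[OF degree_mult_le])
qed

lemma pdeg_sum: "finite A \<Longrightarrow> (\<And>a. a \<in> A \<Longrightarrow> pdeg m (f a)) \<Longrightarrow> pdeg m (\<lambda>x. \<Sum>a\<in>A. f a x)"
proof (induction A rule: finite_induct)
  case empty then show ?case using pdeg_const[of m 0] by simp
next
  case (insert a A)
  then show ?case using pdeg_add[of m "f a" "\<lambda>x. \<Sum>a\<in>A. f a x"] by simp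
qed

lemma pdeg_prod: "finite A \<Longrightarrow> (\<And>a. a \<in> A \<Longrightarrow> pdeg 1 (f a)) \<Longrightarrow> pdeg (card A) (\<lambda>x. \<Prod>a\<in>A. f a x)"
proof (induction A rule: finite_induct)
  case empty then show ?case using pdeg_const[of 0 1] by simp
next
  case (insert a A)
  then show ?case using pdeg_mult[of 1 "f a" "card A" "\<lambda>x. \<Prod>a\<in>A. f a x"] by simp
qed

lemma pdeg_lin: "pdeg 1 (\<lambda>x. (x - b) / (c::'a::field))"
  unfolding pdeg_def
proof (rule exI[of _ "[:-b/c, 1/c:]"], rule conjI)
  show "degree [:- b / c, 1 / c:] \<le> 1" by simp
  show "(\<lambda>x. (x - b) / c) = poly [:- b / c, 1 / c:]"
  proof
    fix x
    have "(x - b) / c = - b / c + x * (1 / c)" by (simp add: diff_divide_distrib)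
    then show "(x - b) / c = poly [:- b / c, 1 / c:] x" by simp
  qed
qed

lemma basis:
  fixes a :: "nat \<Rightarrow> 'a::field"
  assumes "finite S" "inj_on a S" "u \<in> S" "w \<in> S"
  shows "(\<Prod>v\<in>S-{u}. (a w - a v)/(a u - a v)) = (if w = u then 1 else 0)"
proof (cases "w = u")
  case True
  have "(\<Prod>v\<in>S-{u}. (a w - a v)/(a u - a v)) = (\<Prod>v\<in>S-{u}. 1)"
  proof (rule prod.cong)
    fix v assume "v \<in> S - {u}"
    then have "a u \<noteq> a v" using assms(3) inj_onD[OF assms(2), of u v] by blast
    then show "(a w - a v)/(a u - a v) = 1" using True by simp
  qed simp
  then show ?thesis using True by simp
next
  case False
  have "w \<in> S - {u}" using False assms by auto
  then have "(\<Prod>v\<in>S-{u}. (a w - a v)/(a u - a v)) = 0"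
  proof (intro prod_zero)
    show "finite (S - {u})" using assms(1) by blast
    show "\<exists>v\<in>S - {u}. (a w - a v) / (a u - a v) = 0"
      by (rule bexI[of _ w]) (use \<open>w \<in> S - {u}\<close> in simp_all)
  qed
  then show ?thesis using False by (simp only: if_False)
qed

lemma interp:
  fixes a :: "nat \<Rightarrow> 'a::field"
  assumes fin: "finite S" and inj: "inj_on a S" and pf: "pdeg m f" and lt: "m < card S"
  shows "f y = (\<Sum>u\<in>S. f (a u) * (\<Prod>v\<in>S-{u}. (y - a v)/(a u - a v)))"
proof -
  define g where "g = (\<lambda>y. \<Sum>u\<in>S. f (a u) * (\<Prod>v\<in>S-{u}. (y - a v)/(a u - a v)))"
  have pg: "pdeg (card S - 1) g"
    unfolding g_def
  proof (rule pdeg_sum[OF fin])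
    fix u assume u: "u \<in> S"
    have "pdeg (0 + card (S - {u})) (\<lambda>y. f (a u) * (\<Prod>v\<in>S-{u}. (y - a v)/(a u - a v)))"
      by (rule pdeg_mult[OF pdeg_const pdeg_prod]) (use fin pdeg_lin in auto)
    then show "pdeg (card S - 1) (\<lambda>y. f (a u) * (\<Prod>v\<in>S-{u}. (y - a v)/(a u - a v)))"
      using u fin by simp
  qed
  obtain P where P: "degree P \<le> m" "f = poly P" using pf unfolding pdeg_def by blast
  obtain Q where Q: "degree Q \<le> card S - 1" "g = poly Q" using pg unfolding pdeg_def by blast
  have agree: "poly P x = poly Q x" if xS: "x \<in> a ` S" for x
  proof -
    obtain w where w: "w \<in> S" "x = a w" using xS by blast
    have "g (a w) = (\<Sum>u\<in>S. (if w = u then f (a u) else 0))"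
      unfolding g_def by (rule sum.cong) (simp_all add: basis[OF fin inj _ w(1)])
    also have "\<dots> = f (a w)" using fin w(1) by (simp add: sum.delta)
    finally have "g (a w) = f (a w)" .
    then show ?thesis using P(2) Q(2) w(2) by simp
  qed
  have cS: "card (a ` S) = card S" using card_image[OF inj] .
  have "P = Q"
  proof (rule poly_eqI_degree[OF agree])
    show "degree P < card (a ` S)" using P(1) cS lt by linarith
    show "degree Q < card (a ` S)" using Q(1) cS lt by linarith
  qed
  then have "f y = g y" using P Q by simp
  then show ?thesis unfolding g_def .
qed

lemma L_beta:
  assumes "inj_on beta {1..KT}" "k \<in> {1..KT}" "j \<in> {1..KT}"
  shows "lagrange_L beta KT k (beta j) = (if j = k then 1 else 0)"
  unfolding lagrange_L_def using basis[OF _ assms(1) assms(2) assms(3)] by simp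

lemma pdeg_L:
  assumes "k \<in> {1..KT}"
  shows "pdeg (KT - 1) (lagrange_L beta KT k)"
proof -
  have "pdeg (card ({1..KT} - {k})) (\<lambda>x. \<Prod>l\<in>{1..KT} - {k}. (x - beta l) / (beta k - beta l))"
    by (rule pdeg_prod, simp, rule pdeg_lin)
  moreover have "card ({1..KT} - {k}) = KT - 1" using assms by simp
  ultimately show ?thesis unfolding lagrange_L_def by (simp add: eta_contract_eq)
qed

lemma pdeg_cL:
  assumes "k \<in> {1..KT}"
  shows "pdeg (KT - 1) (\<lambda>x. c * lagrange_L beta KT k x)"
  using pdeg_mult[OF pdeg_const[of 0 c] pdeg_L[OF assms, of beta]] by simp

lemma pdeg_F: "pdeg (K + T - 1) (\<lambda>x. polyF M K T beta X Z n i x r c)"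
  unfolding polyF_def
  by (intro pdeg_add pdeg_sum finite_atLeastAtMost) (rule pdeg_cL, simp)+

lemma pdeg_G: "pdeg (K + T - 1) (\<lambda>x. polyG K T beta W V n i x r c)"
  unfolding polyG_def
  by (intro pdeg_add pdeg_sum finite_atLeastAtMost) (rule pdeg_cL, simp)+

lemma polyF_beta:
  assumes inj: "inj_on beta {1..K+T}" and k: "k \<in> {1..K}"
  shows "polyF M K T beta X Z n i (beta k) = row_block M K (X n i) k"
proof (intro ext)
  fix r c
  have kk: "k \<in> {1..K+T}" using k by simp
  have s1: "(\<Sum>k'=1..K. row_block M K (X n i) k' r c * lagrange_L beta (K+T) k' (beta k))
      = (\<Sum>k'=1..K. if k = k' then row_block M K (X n i) k' r c else 0)"
    by (rule sum.cong) (use L_beta[OF inj _ kk] in auto)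
  have s2: "(\<Sum>k'=K+1..K+T. Z n i k' r c * lagrange_L beta (K+T) k' (beta k)) = 0"
    by (rule sum.neutral) (use L_beta[OF inj _ kk] k in auto)
  show "polyF M K T beta X Z n i (beta k) r c = row_block M K (X n i) k r c"
    unfolding polyF_def s1 s2 using k by (simp add: sum.delta)
qed

lemma polyG_beta:
  assumes inj: "inj_on beta {1..K+T}" and k: "k \<in> {1..K}"
  shows "polyG K T beta W V n i (beta k) = W n i"
proof (intro ext)
  fix r c
  have kk: "k \<in> {1..K+T}" using k by simp
  have s1: "(\<Sum>k'=1..K. W n i r c * lagrange_L beta (K+T) k' (beta k))
      = (\<Sum>k'=1..K. if k = k' then W n i r c else 0)"
    by (rule sum.cong) (use L_beta[OF inj _ kk] in auto)
  have s2: "(\<Sum>k'=K+1..K+T. V n i k' r c * lagrange_L beta (K+T) k' (beta k)) = 0"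
    by (rule sum.neutral) (use L_beta[OF inj _ kk] k in auto)
  show "polyG K T beta W V n i (beta k) r c = W n i r c"
    unfolding polyG_def s1 s2 using k by (simp add: sum.delta)
qed

theorem theorem1:
  fixes p N K T M h :: nat
    and alpha beta :: "nat \<Rightarrow> 'a::{field,finite}"
    and B :: "nat set"
  assumes "prime p" and "CARD('a) = p"
    and "N > 0" "K > 0" "T > 0" "M > 0" "h > 0"
    and "K dvd M"
    and "inj_on beta {1..K+T}"
    and "inj_on alpha {1..N}"
    and "alpha ` {1..N} \<inter> beta ` {1..K+T} = {}"
    and "B \<subseteq> {..<M div K}"
  shows "\<forall>U. U \<subseteq> {1..N} \<and> card U \<ge> 2 * (K + T - 1) + 1 \<longrightarrow>
    (\<exists>dec :: (nat \<Rightarrow> 'a fmat) \<Rightarrow> 'a fmat.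
      \<forall>(D :: nat \<Rightarrow> nat) (d :: nat \<Rightarrow> nat) (X :: nat \<Rightarrow> nat \<Rightarrow> 'a fmat) (W :: nat \<Rightarrow> nat \<Rightarrow> 'a fmat)
        (Z :: nat \<Rightarrow> nat \<Rightarrow> nat \<Rightarrow> 'a fmat) (V :: nat \<Rightarrow> nat \<Rightarrow> nat \<Rightarrow> 'a fmat).
        (\<forall>n\<in>{1..N}. D n > 0 \<and> d n > 0) \<longrightarrow>
        (\<forall>r < K * card B. \<forall>c < h.
           dec (\<lambda>n'. if n' \<in> U then coded_H N K T M alpha beta B D d X W Z V n' else (\<lambda>_ _. 0)) r c
           = Hbar N K M B D d X W r c))"
proof (intro allI impI)
  fix U assume U: "U \<subseteq> {1..N} \<and> card U \<ge> 2 * (K + T - 1) + 1"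
  have finU: "finite U" using U finite_subset by blast
  have injU: "inj_on alpha U" using U assms(10) inj_on_subset by blast
  define dec where "dec = (\<lambda>(H::nat \<Rightarrow> 'a fmat) r c. \<Sum>u\<in>U. H u (r mod card B) c *
      (\<Prod>v\<in>U-{u}. (beta (r div card B + 1) - alpha v) / (alpha u - alpha v)))"
  show "\<exists>dec :: (nat \<Rightarrow> 'a fmat) \<Rightarrow> 'a fmat.
      \<forall>(D :: nat \<Rightarrow> nat) (d :: nat \<Rightarrow> nat) (X :: nat \<Rightarrow> nat \<Rightarrow> 'a fmat) (W :: nat \<Rightarrow> nat \<Rightarrow> 'a fmat)
        (Z :: nat \<Rightarrow> nat \<Rightarrow> nat \<Rightarrow> 'a fmat) (V :: nat \<Rightarrow> nat \<Rightarrow> nat \<Rightarrow> 'a fmat).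
        (\<forall>n\<in>{1..N}. D n > 0 \<and> d n > 0) \<longrightarrow>
        (\<forall>r < K * card B. \<forall>c < h.
           dec (\<lambda>n'. if n' \<in> U then coded_H N K T M alpha beta B D d X W Z V n' else (\<lambda>_ _. 0)) r c
           = Hbar N K M B D d X W r c)"
  proof (rule exI[of _ dec], intro allI impI)
    fix D d :: "nat \<Rightarrow> nat" and X W :: "nat \<Rightarrow> nat \<Rightarrow> 'a fmat" and Z V :: "nat \<Rightarrow> nat \<Rightarrow> nat \<Rightarrow> 'a fmat"
      and r c
    assume r: "r < K * card B"
    define k where "k = r div card B + 1"
    define rr where "rr = r mod card B"
    have cB: "card B > 0" using r by (cases "card B = 0") auto
    have "r div card B < K" using r by (simp add: less_mult_imp_div_less)
    then have k: "k \<in> {1..K}" unfolding k_def by simp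
    define f where "f = (\<lambda>x. \<Sum>n=1..N. \<Sum>i=1..D n. \<Sum>j<d n.
        polyF M K T beta X Z n i x (sorted_list_of_set B ! rr) j * polyG K T beta W V n i x j c)"
    have cod: "coded_H N K T M alpha beta B D d X W Z V u rr c = f (alpha u)" for u
      by (simp add: coded_H_def f_def mmul_def submat_rows_def)
    have pf: "pdeg (2 * (K + T - 1)) f"
      unfolding f_def
    proof (intro pdeg_sum finite_atLeastAtMost finite_lessThan)
      fix n i j
      show "pdeg (2 * (K + T - 1)) (\<lambda>x. polyF M K T beta X Z n i x (sorted_list_of_set B ! rr) j *
            polyG K T beta W V n i x j c)"
        using pdeg_mult[OF pdeg_F pdeg_G] by (simp add: mult_2)
    qed
    have "dec (\<lambda>n'. if n' \<in> U then coded_H N K T M alpha beta B D d X W Z V n' else (\<lambda>_ _. 0)) r c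
        = (\<Sum>u\<in>U. f (alpha u) * (\<Prod>v\<in>U-{u}. (beta k - alpha v) / (alpha u - alpha v)))"
      unfolding dec_def by (rule sum.cong) (simp_all add: cod[unfolded rr_def] k_def)
    also have "\<dots> = f (beta k)"
      by (rule interp[symmetric, OF finU injU pf]) (use U in simp)
    also have "f (beta k) = Hbar N K M B D d X W r c"
      unfolding f_def Hbar_def Hbar_n_def mmul_def submat_rows_def k_def[symmetric] rr_def[symmetric]
        polyF_beta[OF assms(9) k] polyG_beta[OF assms(9) k] by simp
    finally show "dec (\<lambda>n'. if n' \<in> U then coded_H N K T M alpha beta B D d X W Z V n' else (\<lambda>_ _. 0)) r c
        = Hbar N K M B D d X W r c" .
  qed
qed

end
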